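(* For every non-negative integer $n$, the map $(T,\lambda)\mapsto\sigma(T,\lambda)$ is a bijection from the set of all increasing trees with $n$ branchings onto the set of all set compositions of $[n]=\{1,\ldots,n\}$.
   Context: A (planar rooted) tree is a finite planar rooted tree in which every vertex has exactly one outgoing edge (towards the root; the vertex nearest the root has an outgoing root edge) and at least two incoming edges, ordered from left to right; incoming edges either come from another vertex or are leaves. The trivial tree $\varepsilon$ has no vertex (a single edge). For $m\ge 1$ and trees $T_0,\ldots,T_m$, the wedge $\bigvee(T_0,\ldots,T_m)$ is obtained by joining the roots of $T_0,\ldots,T_m$ (in this left-to-right order) to a new vertex, which receives a new root edge; every non-trivial tree is uniquely such a wedge. A vertex with $m+1$ incoming edges carries $m$ branchings, namely the $m$ pairs of consecutive incoming edges at that vertex; a branching is assigned the vertex carrying it. Let $B(T)$ be the set of branchings of $T$ and $b(T)=|B(T)|$. The left-to-right order $\preceq$ on $B(T)$ is defined recursively: if $T=\bigvee(T_0,\ldots,T_m)$ and $b_1,\ldots,b_m$ are the branchings at the root vertex, from left to right (the root branchings, $b_i$ lying between $T_{i-1}$ and $T_i$), then $b_i\prec b\prec b_{i+1}$ for all $b\in B(T_i)$ (with $b_0$, $b_{m+1}$ omitted), and $B(T_i)$ carries its own order. The natural labelling is the unique order-preserving bijection $([n],\le)\to(B(T),\preceq)$, $n=b(T)$. A standard level function on $T$ is a surjective map $\lambda$ from the set of vertices of $T$ onto $[k]$ for some $k\ge 0$ that is strictly increasing along every path from a leaf to the root; an increasing tree is a pair $(T,\lambda)$ with $\lambda$ a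 standard level function, and the level of a branching is the level of its vertex. A set composition of a finite set $S$ of length $k$ is a tuple $(P_1,\ldots,P_k)$ of pairwise disjoint non-empty subsets with union $S$. For an increasing tree $(T,\lambda)$ with $n$ branchings and $k$ levels, $\sigma(T,\lambda)=(P_1,\ldots,P_k)$ where $P_i$ is the set of natural labels of the branchings of $T$ at level $i$. *)

theory Defs
  imports Main
begin

text \<open>Planar rooted trees: Leaf is the trivial tree (a single edge);
  Node [T0,...,Tm] is the wedge. Well-formedness: every vertex has at least two incoming edges.\<close>
datatype ptree = Leaf | Node "ptree list"

fun wf_ptree :: "ptree \<Rightarrow> bool" where
  "wf_ptree Leaf = True"
| "wf_ptree (Node ts) = (2 \<le> length ts \<and> (\<forall>t\<in>set ts. wf_ptree t))"

text \<open>Vertices are addressed by paths from the root: [] is the root vertex,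
  i # p is vertex p of the i-th subtree (counted from 0, left to right).\<close>
function vertices :: "ptree \<Rightarrow> nat list set" where
  "vertices Leaf = {}"
| "vertices (Node ts) = insert [] (\<Union>(i, t)\<in>set (zip [0..<length ts] ts). (Cons i) ` vertices t)"
  by pat_completeness auto
termination
  by (relation "measure size") (auto dest!: set_zip_rightD simp: less_Suc_eq_le intro: size_list_estimation')

text \<open>Branchings: a pair (p, j) with 1 \<le> j \<le> m is the j-th branching at vertex p
  (between incoming edges j-1 and j). The list is in the left-to-right order:
  B(T0), b1, B(T1), b2, ..., bm, B(Tm).\<close>
function branchings :: "ptree \<Rightarrow> (nat list \<times> nat) list" where
  "branchings Leaf = []"
| "branchings (Node ts) =
     concat (map (\<lambda>(i, t). map (\<lambda>(p, j). (i # p, j)) (branchings t)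
                       @ (if i + 1 < length ts then [([], i + 1)] else []))
              (zip [0..<length ts] ts))"
  by pat_completeness auto
termination
  by (relation "measure size") (auto dest!: set_zip_rightD simp: less_Suc_eq_le intro: size_list_estimation')

definition num_branchings :: "ptree \<Rightarrow> nat" where
  "num_branchings T = length (branchings T)"

definition std_level :: "ptree \<Rightarrow> (nat list \<Rightarrow> nat) \<Rightarrow> bool" where
  "std_level T lam \<longleftrightarrow>
     (\<forall>p. p \<notin> vertices T \<longrightarrow> lam p = 0) \<and>
     (\<exists>k. lam ` vertices T = {1..k}) \<and>
     (\<forall>p i. p \<in> vertices T \<longrightarrow> p @ [i] \<in> vertices T \<longrightarrow> lam (p @ [i]) < lam p)"

definition increasing_trees :: "nat \<Rightarrow> (ptree \<times> (nat list \<Rightarrow> nat)) set" where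
  "increasing_trees n = {(T, lam). wf_ptree T \<and> std_level T lam \<and> num_branchings T = n}"

definition num_levels :: "ptree \<Rightarrow> (nat list \<Rightarrow> nat) \<Rightarrow> nat" where
  "num_levels T lam = card (lam ` vertices T)"

text \<open>sigma(T, lam) = (P1,...,Pk), Pi = natural labels (1-based positions in the
  left-to-right order) of branchings at level i.\<close>
definition sigma :: "ptree \<times> (nat list \<Rightarrow> nat) \<Rightarrow> nat set list" where
  "sigma Tl = (case Tl of (T, lam) \<Rightarrow>
     map (\<lambda>i. {Suc q | q. q < length (branchings T) \<and> lam (fst (branchings T ! q)) = i})
         [1..<Suc (num_levels T lam)])"

definition set_composition :: "'a set \<Rightarrow> 'a set list \<Rightarrow> bool" where
  "set_composition S Ps \<longleftrightarrow>
     (\<forall>P\<in>set Ps. P \<noteq> {}) \<and>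
     (\<forall>i j. i < length Ps \<longrightarrow> j < length Ps \<longrightarrow> i \<noteq> j \<longrightarrow> Ps ! i \<inter> Ps ! j = {}) \<and>
     \<Union>(set Ps) = S"

end

theory Submission
  imports Defs
begin


lemma map_zip_upt: "map f (zip [0..<length xs] xs) = map (\<lambda>i. f (i, xs!i)) [0..<length xs]"
  by (rule nth_equalityI) auto

lemma vertices_Nil_iff: "[] \<in> vertices T \<longleftrightarrow> T \<noteq> Leaf"
  by (cases T) auto

lemma vertices_Cons_Node: "(i # q) \<in> vertices (Node ts) \<longleftrightarrow> i < length ts \<and> q \<in> vertices (ts!i)"
  by (auto simp: set_zip) force

lemma vertices_Node_Nil: "[] \<in> vertices (Node ts)" by simp

lemma vertices_Leaf: "vertices Leaf = {}" by simp

declare vertices.simps[simp del]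

lemma branchings_Node: "branchings (Node ts) = concat (map (\<lambda>i. map (\<lambda>(p,j). (i#p,j)) (branchings (ts!i)) @ (if i+1 < length ts then [([],i+1)] else [])) [0..<length ts])"
  by (simp only: branchings.simps map_zip_upt) simp

declare branchings.simps(2)[simp del]

fun joinm :: "'a \<Rightarrow> 'a list list \<Rightarrow> 'a list" where
  "joinm c [] = []" | "joinm c [w] = w" | "joinm c (w#v#ws) = w @ c # joinm c (v#ws)"

lemma joinm_Cons: "joinm c (w # ys) = w @ (if ys = [] then [] else c # joinm c ys)"
  by (cases ys) auto

lemma concat_sep: "a < b \<Longrightarrow> concat (map (\<lambda>i. g i @ (if i+1 < b then [c] else [])) [a..<b]) = joinm c (map g [a..<b])"
proof (induction "b - a" arbitrary: a)
  case 0 then show ?case by simp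
next
  case (Suc k)
  have e: "[a..<b] = a # [Suc a..<b]" using Suc.prems upt_conv_Cons by blast
  show ?case
  proof (cases "Suc a = b")
    case True then show ?thesis using e by simp
  next
    case False
    then have "Suc a < b" using Suc.prems by simp
    then show ?thesis using Suc.hyps(1)[of "Suc a"] Suc.hyps(2) e by (simp add: joinm_Cons)
  qed
qed

fun splitm :: "'a \<Rightarrow> 'a list \<Rightarrow> 'a list list" where
  "splitm m [] = [[]]"
| "splitm m (x#xs) = (if x = m then [] # splitm m xs else (x # hd (splitm m xs)) # tl (splitm m xs))"

lemma splitm_ne[simp]: "splitm m xs \<noteq> []"
  by (induction xs) auto

lemma joinm_splitm: "joinm m (splitm m xs) = xs"
proof (induction xs)
  case Nil then show ?case by simp
next
  case (Cons x xs)
  let ?r = "splitm m xs"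
  have r: "?r = hd ?r # tl ?r" by simp
  show ?case
  proof (cases "x = m")
    case True then show ?thesis using Cons by (simp add: joinm_Cons)
  next
    case False
    have "joinm m ?r = hd ?r @ (if tl ?r = [] then [] else m # joinm m (tl ?r))"
      by (subst r) (simp only: joinm_Cons)
    then show ?thesis using False Cons by (simp add: joinm_Cons)
  qed
qed

lemma splitm_notin_single: "m \<notin> set w \<Longrightarrow> splitm m w = [w]"
  by (induction w) auto

lemma splitm_app: "m \<notin> set w \<Longrightarrow> splitm m (w @ m # ys) = w # splitm m ys"
  by (induction w) auto

lemma splitm_joinm: "ws \<noteq> [] \<Longrightarrow> \<forall>w\<in>set ws. m \<notin> set w \<Longrightarrow> splitm m (joinm m ws) = ws"
  by (induction m ws rule: joinm.induct) (auto simp: splitm_notin_single splitm_app)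

lemma splitm_notin: "s \<in> set (splitm m xs) \<Longrightarrow> m \<notin> set s"
proof (induction xs arbitrary: s)
  case Nil then show ?case by simp
next
  case (Cons x xs)
  have h: "hd (splitm m xs) \<in> set (splitm m xs)" by simp
  have t: "set (tl (splitm m xs)) \<subseteq> set (splitm m xs)" by (simp add: list.set_sel(2) subsetI)
  from Cons show ?case using h t by (auto split: if_splits)
qed

lemma splitm_subset: "s \<in> set (splitm m xs) \<Longrightarrow> set s \<subseteq> set xs"
proof (induction xs arbitrary: s)
  case Nil then show ?case by simp
next
  case (Cons x xs)
  have h: "hd (splitm m xs) \<in> set (splitm m xs)" by simp
  have t: "set (tl (splitm m xs)) \<subseteq> set (splitm m xs)" by (simp add: list.set_sel(2) subsetI)
  have hh: "set (hd (splitm m xs)) \<subseteq> set xs" using Cons.IH[OF h] .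
  show ?case
  proof (cases "x = m")
    case True then show ?thesis using Cons.prems Cons.IH by (auto split: if_splits)
  next
    case False
    then have "s = x # hd (splitm m xs) \<or> s \<in> set (tl (splitm m xs))" using Cons.prems by simp
    then show ?thesis using hh t Cons.IH by fastforce
  qed
qed

lemma splitm_len_le: "s \<in> set (splitm m xs) \<Longrightarrow> length s \<le> length xs"
proof (induction xs arbitrary: s)
  case Nil then show ?case by simp
next
  case (Cons x xs)
  have h: "hd (splitm m xs) \<in> set (splitm m xs)" by simp
  have t: "set (tl (splitm m xs)) \<subseteq> set (splitm m xs)" by (simp add: list.set_sel(2) subsetI)
  from Cons show ?case using h t by (fastforce split: if_splits)
qed

lemma splitm_len_lt: "m \<in> set xs \<Longrightarrow> s \<in> set (splitm m xs) \<Longrightarrow> length s < length xs"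
proof (induction xs arbitrary: s)
  case Nil then show ?case by simp
next
  case (Cons x xs)
  have h: "hd (splitm m xs) \<in> set (splitm m xs)" by simp
  have t: "set (tl (splitm m xs)) \<subseteq> set (splitm m xs)" by (simp add: list.set_sel(2) subsetI)
  show ?case
  proof (cases "x = m")
    case True then show ?thesis using Cons.prems splitm_len_le[of s m xs] by (auto split: if_splits)
  next
    case False
    then have "m \<in> set xs" using Cons.prems by simp
    then show ?thesis using Cons False h t by (fastforce split: if_splits)
  qed
qed

lemma splitm_len_ge2: "m \<in> set xs \<Longrightarrow> 2 \<le> length (splitm m xs)"
proof (induction xs)
  case Nil then show ?case by simp
next
  case (Cons x xs)
  have "splitm m xs \<noteq> []" by simp
  then have "length (splitm m xs) \<ge> 1" by (cases "splitm m xs") auto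
  with Cons show ?case by (auto split: if_splits)
qed

lemma set_joinm: "ws \<noteq> [] \<Longrightarrow> set (joinm c ws) = (\<Union>w\<in>set ws. set w) \<union> (if 2 \<le> length ws then {c} else {})"
  by (induction c ws rule: joinm.induct) auto



definition word :: "ptree \<Rightarrow> (nat list \<Rightarrow> nat) \<Rightarrow> nat list" where
  "word T lam = map (\<lambda>b. lam (fst b)) (branchings T)"

definition strict :: "ptree \<Rightarrow> (nat list \<Rightarrow> nat) \<Rightarrow> bool" where
  "strict T lam \<longleftrightarrow> (\<forall>p i. p \<in> vertices T \<longrightarrow> p @ [i] \<in> vertices T \<longrightarrow> lam (p @ [i]) < lam p)"

definition zout :: "ptree \<Rightarrow> (nat list \<Rightarrow> nat) \<Rightarrow> bool" where
  "zout T lam \<longleftrightarrow> (\<forall>p. p \<notin> vertices T \<longrightarrow> lam p = 0)"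

lemma word_Leaf[simp]: "word Leaf lam = []"
  by (simp add: word_def)

lemma word_Node: "ts \<noteq> [] \<Longrightarrow> word (Node ts) lam = joinm (lam []) (map (\<lambda>i. word (ts!i) (lam \<circ> Cons i)) [0..<length ts])"
proof -
  assume "ts \<noteq> []"
  have "word (Node ts) lam = concat (map (\<lambda>i. word (ts!i) (lam \<circ> Cons i) @ (if i+1 < length ts then [lam []] else [])) [0..<length ts])"
    by (simp add: word_def branchings_Node map_concat case_prod_beta comp_def) (rule arg_cong[where f=concat], rule map_cong, auto)
  also have "\<dots> = joinm (lam []) (map (\<lambda>i. word (ts!i) (lam \<circ> Cons i)) [0..<length ts])"
    using \<open>ts \<noteq> []\<close> by (intro concat_sep) simp
  finally show ?thesis .
qed

lemma length_word: "length (word T lam) = num_branchings T"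
  by (simp add: word_def num_branchings_def)

lemma strict_Node: "strict (Node ts) lam \<longleftrightarrow> (\<forall>i<length ts. strict (ts!i) (lam \<circ> Cons i) \<and> (ts!i \<noteq> Leaf \<longrightarrow> lam [i] < lam []))"
proof
  assume a: "strict (Node ts) lam"
  show "\<forall>i<length ts. strict (ts!i) (lam \<circ> Cons i) \<and> (ts!i \<noteq> Leaf \<longrightarrow> lam [i] < lam [])"
  proof (intro allI impI conjI)
    fix i assume i: "i < length ts"
    show "strict (ts!i) (lam \<circ> Cons i)" unfolding strict_def
    proof (intro allI impI)
      fix p j assume "p \<in> vertices (ts!i)" "p @ [j] \<in> vertices (ts!i)"
      then have "i # p \<in> vertices (Node ts)" "(i # p) @ [j] \<in> vertices (Node ts)"
        using i by (simp_all add: vertices_Cons_Node)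
      then show "(lam \<circ> Cons i) (p @ [j]) < (lam \<circ> Cons i) p" using a unfolding strict_def by fastforce
    qed
    assume "ts!i \<noteq> Leaf"
    then have "[] @ [i] \<in> vertices (Node ts)" using i by (simp add: vertices_Cons_Node vertices_Nil_iff)
    then show "lam [i] < lam []" using a vertices_Node_Nil unfolding strict_def by fastforce
  qed
next
  assume a: "\<forall>i<length ts. strict (ts!i) (lam \<circ> Cons i) \<and> (ts!i \<noteq> Leaf \<longrightarrow> lam [i] < lam [])"
  show "strict (Node ts) lam" unfolding strict_def
  proof (intro allI impI)
    fix p j assume p: "p \<in> vertices (Node ts)" and pj: "p @ [j] \<in> vertices (Node ts)"
    show "lam (p @ [j]) < lam p"
    proof (cases p)
      case Nil
      then show ?thesis using pj a by (simp add: vertices_Cons_Node vertices_Nil_iff)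
    next
      case (Cons i q)
      then show ?thesis using p pj a unfolding strict_def by (auto simp: vertices_Cons_Node)
    qed
  qed
qed

lemma zout_Node: "zout (Node ts) lam \<longleftrightarrow> (\<forall>i<length ts. zout (ts!i) (lam \<circ> Cons i)) \<and> (\<forall>i q. length ts \<le> i \<longrightarrow> lam (i # q) = 0)"
proof
  assume a: "zout (Node ts) lam"
  show "(\<forall>i<length ts. zout (ts!i) (lam \<circ> Cons i)) \<and> (\<forall>i q. length ts \<le> i \<longrightarrow> lam (i # q) = 0)"
    using a unfolding zout_def by (auto simp: vertices_Cons_Node)
next
  assume a: "(\<forall>i<length ts. zout (ts!i) (lam \<circ> Cons i)) \<and> (\<forall>i q. length ts \<le> i \<longrightarrow> lam (i # q) = 0)"
  show "zout (Node ts) lam" unfolding zout_def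
  proof (intro allI impI)
    fix p assume "p \<notin> vertices (Node ts)"
    then show "lam p = 0" using a vertices_Node_Nil unfolding zout_def
      by (cases p) (auto simp: vertices_Cons_Node not_less, metis not_le)
  qed
qed

lemma below_root: "strict T lam \<Longrightarrow> v \<in> vertices T \<Longrightarrow> v \<noteq> [] \<Longrightarrow> lam v < lam []"
proof (induction T arbitrary: lam v)
  case Leaf then show ?case by (simp add: vertices_Leaf)
next
  case (Node ts)
  obtain i q where v: "v = i # q" using Node.prems(3) by (cases v) auto
  have i: "i < length ts" and q: "q \<in> vertices (ts!i)" using Node.prems(2) v by (simp_all add: vertices_Cons_Node)
  have s: "strict (ts!i) (lam \<circ> Cons i)" and r: "ts!i \<noteq> Leaf \<longrightarrow> lam [i] < lam []"
    using Node.prems(1) i by (simp_all add: strict_Node)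
  have ne: "ts!i \<noteq> Leaf" using q by (auto simp: vertices_Leaf)
  show ?case
  proof (cases "q = []")
    case True then show ?thesis using v r ne by simp
  next
    case False
    have "(lam \<circ> Cons i) q < (lam \<circ> Cons i) []"
      using Node.IH[OF nth_mem[OF i] s q False] .
    then show ?thesis using v r ne by simp
  qed
qed

lemma set_word: "wf_ptree T \<Longrightarrow> set (word T lam) = lam ` vertices T"
proof (induction T arbitrary: lam)
  case Leaf then show ?case by (simp add: vertices_Leaf)
next
  case (Node ts)
  have l: "2 \<le> length ts" and w: "\<forall>t\<in>set ts. wf_ptree t" using Node.prems by auto
  have ne: "ts \<noteq> []" using l by auto
  have "set (word (Node ts) lam) = (\<Union>i<length ts. set (word (ts!i) (lam \<circ> Cons i))) \<union> {lam []}"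
    using l ne by (simp add: word_Node set_joinm atLeast0LessThan)
  also have "\<dots> = (\<Union>i<length ts. (lam \<circ> Cons i) ` vertices (ts!i)) \<union> {lam []}"
    using Node.IH w by (simp add: image_comp)
  also have "\<dots> = lam ` vertices (Node ts)"
  proof (rule set_eqI, rule iffI)
    fix x assume "x \<in> (\<Union>i<length ts. (lam \<circ> Cons i) ` vertices (ts!i)) \<union> {lam []}"
    then show "x \<in> lam ` vertices (Node ts)"
    proof
      assume "x \<in> (\<Union>i<length ts. (lam \<circ> Cons i) ` vertices (ts!i))"
      then obtain i q where "i < length ts" "q \<in> vertices (ts!i)" "x = lam (i # q)" by auto
      then show ?thesis by (auto simp: vertices_Cons_Node intro!: image_eqI[where x="i#q"])
    next
      assume "x \<in> {lam []}"
      then show ?thesis using vertices_Node_Nil by auto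
    qed
  next
    fix x assume "x \<in> lam ` vertices (Node ts)"
    then obtain p where p: "p \<in> vertices (Node ts)" "x = lam p" by auto
    then show "x \<in> (\<Union>i<length ts. (lam \<circ> Cons i) ` vertices (ts!i)) \<union> {lam []}"
      by (cases p) (auto simp: vertices_Cons_Node)
  qed
  finally show ?case .
qed



lemma build_term1: "w \<noteq> [] \<Longrightarrow> s \<in> set (splitm (Max (set w)) w) \<Longrightarrow> length s < length w"
  by (rule splitm_len_lt) auto

lemma build_term2: "w \<noteq> [] \<Longrightarrow> i < length (splitm (Max (set w)) w) \<Longrightarrow> length (splitm (Max (set w)) w ! i) < length w"
  by (rule build_term1) auto

function build :: "nat list \<Rightarrow> ptree \<times> (nat list \<Rightarrow> nat)" where
  "build w = (if w = [] then (Leaf, \<lambda>_. 0) else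
     (Node (map (\<lambda>s. fst (build s)) (splitm (Max (set w)) w)),
      \<lambda>p. case p of [] \<Rightarrow> Max (set w)
        | i # q \<Rightarrow> (if i < length (splitm (Max (set w)) w) then snd (build (splitm (Max (set w)) w ! i)) q else 0)))"
  by pat_completeness auto
termination
  by (relation "measure length") (auto intro: build_term1 build_term2)

declare build.simps[simp del]

lemma build_Nil[simp]: "build [] = (Leaf, \<lambda>_. 0)"
  by (simp add: build.simps)

context
  fixes w :: "nat list"
  assumes ne: "w \<noteq> []"
begin

lemma build_fst: "fst (build w) = Node (map (\<lambda>s. fst (build s)) (splitm (Max (set w)) w))"
  using ne by (subst build.simps) simp

lemma build_snd_Nil: "snd (build w) [] = Max (set w)"
  using ne by (subst build.simps) simp

lemma build_snd_Cons: "snd (build w) (i # q) = (if i < length (splitm (Max (set w)) w) then snd (build (splitm (Max (set w)) w ! i)) q else 0)"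
  using ne by (subst build.simps) simp

end

lemma build_props: "wf_ptree (fst (build w)) \<and> zout (fst (build w)) (snd (build w)) \<and>
   strict (fst (build w)) (snd (build w)) \<and> word (fst (build w)) (snd (build w)) = w"
proof (induction w rule: length_induct)
  case (1 w)
  show ?case
  proof (cases "w = []")
    case True
    then show ?thesis by (simp add: zout_def strict_def vertices_Leaf)
  next
    case False
    define m where "m = Max (set w)"
    define ss where "ss = splitm m w"
    define ts where "ts = map (\<lambda>s. fst (build s)) ss"
    have m: "m \<in> set w" unfolding m_def using False by simp
    have T: "fst (build w) = Node ts" using build_fst[OF False] unfolding ts_def ss_def m_def .
    have lt: "length (ss!i) < length w" if "i < length ss" for i
      using splitm_len_lt[OF m] nth_mem[OF that] unfolding ss_def by blast
    have IH: "wf_ptree (ts!i) \<and> zout (ts!i) (snd (build (ss!i))) \<and> strict (ts!i) (snd (build (ss!i)))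
       \<and> word (ts!i) (snd (build (ss!i))) = ss!i" if "i < length ss" for i
      using "1.IH" lt[OF that] that unfolding ts_def by simp
    have len: "length ts = length ss" unfolding ts_def by simp
    have l2: "2 \<le> length ss" unfolding ss_def using splitm_len_ge2[OF m] .
    have lamc: "snd (build w) \<circ> Cons i = snd (build (ss!i))" if "i < length ss" for i
      using that by (auto simp: build_snd_Cons[OF False] ss_def m_def)
    have lam0: "snd (build w) [] = m" using build_snd_Nil[OF False] m_def by simp
    have wf: "wf_ptree (Node ts)"
      using IH len l2 by (auto simp: in_set_conv_nth)
    have zo: "zout (Node ts) (snd (build w))"
      unfolding zout_Node using IH lamc len
      by (auto simp: build_snd_Cons[OF False] ss_def[symmetric] m_def[symmetric])
    have st: "strict (Node ts) (snd (build w))"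
      unfolding strict_Node
    proof (intro allI impI conjI)
      fix i assume i: "i < length ts"
      then show "strict (ts ! i) (snd (build w) \<circ> Cons i)" using IH lamc len by simp
      assume nl: "ts!i \<noteq> Leaf"
      have i': "i < length ss" using i len by simp
      have sne: "ss!i \<noteq> []" using nl i' unfolding ts_def by auto
      have "snd (build w) [i] = Max (set (ss!i))"
        using lamc[OF i'] build_snd_Nil[OF sne] by (metis comp_apply)
      moreover have "Max (set (ss!i)) \<in> set (ss!i)" using sne by simp
      moreover have "set (ss!i) \<subseteq> set w" using splitm_subset[of "ss!i" m w] nth_mem[OF i'] unfolding ss_def by simp
      moreover have "m \<notin> set (ss!i)" using splitm_notin[of "ss!i" m w] nth_mem[OF i'] unfolding ss_def by simp
      moreover have "\<forall>x\<in>set w. x \<le> m" unfolding m_def by simp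
      ultimately show "snd (build w) [i] < snd (build w) []" using lam0
        by (metis le_neq_implies_less subsetD)
    qed
    have wd: "word (Node ts) (snd (build w)) = w"
    proof -
      have "word (Node ts) (snd (build w)) = joinm m (map (\<lambda>i. word (ts!i) (snd (build w) \<circ> Cons i)) [0..<length ts])"
        using l2 len lam0 by (subst word_Node) auto
      also have "\<dots> = joinm m (map (\<lambda>i. ss!i) [0..<length ss])"
        using IH lamc len by (intro arg_cong[where f="joinm m"] map_cong) auto
      also have "\<dots> = joinm m ss" by (simp add: map_nth)
      also have "\<dots> = w" unfolding ss_def by (rule joinm_splitm)
      finally show ?thesis .
    qed
    show ?thesis using T wf zo st wd by simp
  qed
qed

lemma build_word: "wf_ptree T \<Longrightarrow> strict T lam \<Longrightarrow> zout T lam \<Longrightarrow> build (word T lam) = (T, lam)"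
proof (induction T arbitrary: lam)
  case Leaf
  then show ?case by (auto simp: zout_def vertices_Leaf)
next
  case (Node ts)
  have l: "2 \<le> length ts" and wft: "\<forall>t\<in>set ts. wf_ptree t" using Node.prems by auto
  have ne: "ts \<noteq> []" using l by auto
  define r where "r = lam []"
  define ws where "ws = map (\<lambda>i. word (ts!i) (lam \<circ> Cons i)) [0..<length ts]"
  have w: "word (Node ts) lam = joinm r ws" unfolding ws_def r_def using word_Node[OF ne] .
  have sw: "set (joinm r ws) = (\<Union>x\<in>set ws. set x) \<union> {r}"
    using l by (subst set_joinm) (auto simp: ws_def)
  have small: "x < r" if xv: "x \<in> set v" and vw: "v \<in> set ws" for x v
  proof -
    obtain i where i: "i < length ts" and v: "v = word (ts!i) (lam \<circ> Cons i)" using vw unfolding ws_def by auto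
    have "x \<in> (lam \<circ> Cons i) ` vertices (ts!i)" using xv v set_word wft i by (metis nth_mem)
    then obtain q where q: "q \<in> vertices (ts!i)" "x = lam (i # q)" by auto
    then show "x < r" unfolding r_def using below_root[OF Node.prems(2), of "i#q"] i
      by (simp add: vertices_Cons_Node)
  qed
  have wne: "joinm r ws \<noteq> []" using sw by auto
  have mx: "Max (set (joinm r ws)) = r"
    using sw small by (intro Max_eqI) (auto intro: less_imp_le)
  have sp: "splitm r (joinm r ws) = ws"
    using ne small by (intro splitm_joinm) (auto simp: ws_def)
  have sub: "build (ws!i) = (ts!i, lam \<circ> Cons i)" if "i < length ts" for i
  proof -
    have "strict (ts!i) (lam \<circ> Cons i)" using Node.prems(2) that by (simp add: strict_Node)
    moreover have "zout (ts!i) (lam \<circ> Cons i)" using Node.prems(3) that by (simp add: zout_Node)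
    ultimately show ?thesis using Node.IH[OF nth_mem[OF that]] wft that unfolding ws_def by simp
  qed
  have lws: "length ws = length ts" unfolding ws_def by simp
  have f: "fst (build (joinm r ws)) = Node ts"
    using build_fst[OF wne] mx sp sub lws
    by (simp, metis (no_types, lifting) fst_conv map_nth nth_equalityI length_map nth_map)
  have s: "snd (build (joinm r ws)) = lam"
  proof
    fix p show "snd (build (joinm r ws)) p = lam p"
    proof (cases p)
      case Nil then show ?thesis using build_snd_Nil[OF wne] mx r_def by simp
    next
      case (Cons i q)
      show ?thesis
      proof (cases "i < length ts")
        case True then show ?thesis using build_snd_Cons[OF wne] Cons mx sp sub lws by simp
      next
        case False then show ?thesis using build_snd_Cons[OF wne] Cons mx sp lws Node.prems(3)
          by (simp add: zout_Node)
      qed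
    qed
  qed
  show ?case using w f s by (metis prod.collapse)
qed



definition cmp :: "nat list \<Rightarrow> nat set list" where
  "cmp w = map (\<lambda>i. {Suc q | q. q < length w \<and> w!q = i}) [1..<Suc (card (set w))]"

definition decomp :: "nat \<Rightarrow> nat set list \<Rightarrow> nat list" where
  "decomp n Ps = map (\<lambda>q. Suc (THE i. i < length Ps \<and> Suc q \<in> Ps!i)) [0..<n]"

definition Wd :: "nat \<Rightarrow> nat list set" where
  "Wd n = {w. length w = n \<and> (\<exists>k. set w = {1..k})}"

lemma cmp_len: "set w = {1..k} \<Longrightarrow> length (cmp w) = k"
  by (simp add: cmp_def)

lemma cmp_nth: "set w = {1..k} \<Longrightarrow> i < k \<Longrightarrow> cmp w ! i = {Suc q | q. q < length w \<and> w!q = Suc i}"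
proof -
  assume k: "set w = {1..k}" and i: "i < k"
  have c: "card (set w) = k" using k by simp
  have "[1..<Suc k] ! i = Suc i" using i by (subst nth_upt) auto
  moreover have "i < length [1..<Suc k]" using i by simp
  ultimately show ?thesis unfolding cmp_def c by (simp only: nth_map)
qed

lemma cmp_in: assumes "w \<in> Wd n" shows "set_composition {1..n} (cmp w)"
proof -
  obtain k where k: "set w = {1..k}" and l: "length w = n" using assms by (auto simp: Wd_def)
  have ne: "\<forall>P\<in>set (cmp w). P \<noteq> {}"
  proof
    fix P assume "P \<in> set (cmp w)"
    then obtain i where i: "i < k" "P = cmp w ! i" by (auto simp: in_set_conv_nth cmp_len[OF k])
    have "Suc i \<in> set w" using k i by auto
    then obtain q where "q < length w" "w!q = Suc i" by (auto simp: in_set_conv_nth)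
    then show "P \<noteq> {}" using i cmp_nth[OF k] by auto
  qed
  have dj: "\<forall>i j. i < length (cmp w) \<longrightarrow> j < length (cmp w) \<longrightarrow> i \<noteq> j \<longrightarrow> cmp w ! i \<inter> cmp w ! j = {}"
    using cmp_nth[OF k] cmp_len[OF k] by auto
  have un: "\<Union>(set (cmp w)) = {1..n}"
  proof (rule set_eqI, rule iffI)
    fix x assume "x \<in> \<Union>(set (cmp w))"
    then obtain i where "i < k" "x \<in> cmp w ! i" by (auto simp: in_set_conv_nth cmp_len[OF k])
    then show "x \<in> {1..n}" using cmp_nth[OF k] l by auto
  next
    fix x assume x: "x \<in> {1..n}"
    then obtain q where q: "x = Suc q" "q < n" by (cases x) auto
    have "w!q \<in> {1..k}" using k q l nth_mem by metis
    then obtain i where i: "i < k" "w!q = Suc i" by (cases "w!q") auto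
    then have "x \<in> cmp w ! i" using cmp_nth[OF k] q l by auto
    then show "x \<in> \<Union>(set (cmp w))" using i cmp_len[OF k] by (metis UnionI nth_mem)
  qed
  show ?thesis unfolding set_composition_def using ne dj un by blast
qed

context
  fixes n and Ps :: "nat set list"
  assumes sc: "set_composition {1..n} Ps"
begin

lemma the_idx: "i < length Ps \<Longrightarrow> x \<in> Ps!i \<Longrightarrow> (THE j. j < length Ps \<and> x \<in> Ps!j) = i"
  using sc unfolding set_composition_def by (intro the_equality) blast+

lemma ex_idx: "x \<in> {1..n} \<Longrightarrow> \<exists>i<length Ps. x \<in> Ps!i"
  using sc unfolding set_composition_def by (metis UnionE in_set_conv_nth)

lemma in_range: "i < length Ps \<Longrightarrow> x \<in> Ps!i \<Longrightarrow> x \<in> {1..n}"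
  using sc unfolding set_composition_def by (metis UnionI nth_mem)

lemma decomp_nth: "q < n \<Longrightarrow> i < length Ps \<Longrightarrow> decomp n Ps ! q = Suc i \<longleftrightarrow> Suc q \<in> Ps!i"
proof -
  assume q: "q < n" and i: "i < length Ps"
  obtain j where j: "j < length Ps" "Suc q \<in> Ps!j" using ex_idx[of "Suc q"] q by auto
  have "decomp n Ps ! q = Suc j" using q the_idx[OF j] by (simp add: decomp_def)
  then show ?thesis using j i sc unfolding set_composition_def by auto
qed

lemma decomp_set: "set (decomp n Ps) = {1..length Ps}"
proof (rule set_eqI, rule iffI)
  fix x assume "x \<in> set (decomp n Ps)"
  then obtain q where q: "q < n" "x = decomp n Ps ! q" by (auto simp: in_set_conv_nth decomp_def)
  obtain j where j: "j < length Ps" "Suc q \<in> Ps!j" using ex_idx[of "Suc q"] q by auto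
  then show "x \<in> {1..length Ps}" using decomp_nth[OF q(1) j(1)] q by auto
next
  fix x assume x: "x \<in> {1..length Ps}"
  then obtain i where i: "x = Suc i" "i < length Ps" by (cases x) auto
  have "Ps!i \<noteq> {}" using sc i unfolding set_composition_def by auto
  then obtain y where y: "y \<in> Ps!i" by auto
  then have "y \<in> {1..n}" using in_range i by blast
  then obtain q where q: "y = Suc q" "q < n" by (cases y) auto
  then have "decomp n Ps ! q = x" using decomp_nth[OF q(2) i(2)] y i by simp
  then show "x \<in> set (decomp n Ps)" using q by (auto simp: decomp_def in_set_conv_nth)
qed

lemma decomp_in: "decomp n Ps \<in> Wd n"
  using decomp_set by (auto simp: Wd_def decomp_def)

lemma cmp_decomp: "cmp (decomp n Ps) = Ps"
proof -
  have s: "set (decomp n Ps) = {1..length Ps}" by (rule decomp_set)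
  have ld: "length (decomp n Ps) = n" by (simp add: decomp_def)
  show ?thesis
  proof (rule nth_equalityI)
    show "length (cmp (decomp n Ps)) = length Ps" using cmp_len[OF s] .
    fix i assume "i < length (cmp (decomp n Ps))"
    then have i: "i < length Ps" using cmp_len[OF s] by simp
    show "cmp (decomp n Ps) ! i = Ps ! i"
    proof (rule set_eqI, rule iffI)
      fix x assume "x \<in> cmp (decomp n Ps) ! i"
      then obtain q where "x = Suc q" "q < n" "decomp n Ps ! q = Suc i" using cmp_nth[OF s i] ld by auto
      then show "x \<in> Ps ! i" using decomp_nth i by auto
    next
      fix x assume x: "x \<in> Ps ! i"
      then have "x \<in> {1..n}" using in_range i by blast
      then obtain q where q: "x = Suc q" "q < n" by (cases x) auto
      then show "x \<in> cmp (decomp n Ps) ! i" using cmp_nth[OF s i] ld decomp_nth[OF q(2) i] x by auto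
    qed
  qed
qed

end

lemma decomp_cmp: assumes "w \<in> Wd n" shows "decomp n (cmp w) = w"
proof -
  obtain k where k: "set w = {1..k}" and l: "length w = n" using assms by (auto simp: Wd_def)
  have sc: "set_composition {1..n} (cmp w)" using cmp_in[OF assms] .
  show ?thesis
  proof (rule nth_equalityI)
    show "length (decomp n (cmp w)) = length w" using l by (simp add: decomp_def)
    fix q assume "q < length (decomp n (cmp w))"
    then have q: "q < n" by (simp add: decomp_def)
    have "w!q \<in> {1..k}" using k q l nth_mem by metis
    then obtain i where i: "i < k" "w!q = Suc i" by (cases "w!q") auto
    have "Suc q \<in> cmp w ! i" using cmp_nth[OF k i(1)] i q l by auto
    then show "decomp n (cmp w) ! q = w ! q"
      using decomp_nth[OF sc q] i cmp_len[OF k] by simp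
  qed
qed

lemma comp_bij: "bij_betw cmp (Wd n) {Ps. set_composition {1..n} Ps}"
proof (rule bij_betw_byWitness[where f'="decomp n"])
  show "\<forall>a\<in>Wd n. decomp n (cmp a) = a" using decomp_cmp by blast
  show "\<forall>a'\<in>{Ps. set_composition {1..n} Ps}. cmp (decomp n a') = a'" using cmp_decomp by blast
  show "cmp ` Wd n \<subseteq> {Ps. set_composition {1..n} Ps}" using cmp_in by blast
  show "decomp n ` {Ps. set_composition {1..n} Ps} \<subseteq> Wd n" using decomp_in by blast
qed



lemma sigma_cmp: "wf_ptree T \<Longrightarrow> sigma (T, lam) = cmp (word T lam)"
proof -
  assume wf: "wf_ptree T"
  have l: "length (word T lam) = length (branchings T)" by (simp add: word_def)
  have nt: "q < length (branchings T) \<Longrightarrow> word T lam ! q = lam (fst (branchings T ! q))" for q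
    by (simp add: word_def)
  have c: "card (set (word T lam)) = num_levels T lam" using set_word[OF wf] by (simp add: num_levels_def)
  show ?thesis unfolding sigma_def cmp_def c l
    by (auto intro!: map_cong simp: nt)
qed

lemma word_bij: "bij_betw (\<lambda>(T, lam). word T lam) (increasing_trees n) (Wd n)"
proof (rule bij_betw_byWitness[where f'=build])
  show "\<forall>a\<in>increasing_trees n. build (case a of (T, lam) \<Rightarrow> word T lam) = a"
  proof
    fix a assume "a \<in> increasing_trees n"
    then obtain T lam where a: "a = (T, lam)" "wf_ptree T" "std_level T lam"
      unfolding increasing_trees_def by auto
    then have "strict T lam" "zout T lam" unfolding std_level_def strict_def zout_def by auto
    then show "build (case a of (T, lam) \<Rightarrow> word T lam) = a" using a build_word by simp
  qed
  show "\<forall>a'\<in>Wd n. (case build a' of (T, lam) \<Rightarrow> word T lam) = a'"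
    using build_props by (auto simp: case_prod_beta)
  show "(\<lambda>(T, lam). word T lam) ` increasing_trees n \<subseteq> Wd n"
  proof
    fix w assume "w \<in> (\<lambda>(T, lam). word T lam) ` increasing_trees n"
    then obtain T lam where "(T, lam) \<in> increasing_trees n" "w = word T lam" by auto
    then show "w \<in> Wd n"
      by (auto simp: increasing_trees_def std_level_def Wd_def set_word length_word)
  qed
  show "build ` Wd n \<subseteq> increasing_trees n"
  proof
    fix x assume "x \<in> build ` Wd n"
    then obtain w k where w: "x = build w" "length w = n" "set w = {1..k}" by (auto simp: Wd_def)
    have p: "wf_ptree (fst x)" "zout (fst x) (snd x)" "strict (fst x) (snd x)" "word (fst x) (snd x) = w"
      using build_props w(1) by auto
    have "snd x ` vertices (fst x) = {1..k}" using set_word[OF p(1), of "snd x"] p(4) w(3) by simp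
    then have "std_level (fst x) (snd x)" using p unfolding std_level_def zout_def strict_def by blast
    moreover have "num_branchings (fst x) = n" using p(4) w(2) length_word by metis
    ultimately have "(fst x, snd x) \<in> increasing_trees n" using p(1) unfolding increasing_trees_def
      by (simp add: case_prod_beta)
    then show "x \<in> increasing_trees n" by simp
  qed
qed

theorem theorem1p1:
  fixes n :: nat
  shows "bij_betw sigma (increasing_trees n) {Ps. set_composition {1..n} Ps}"
proof -
  have "bij_betw (cmp \<circ> (\<lambda>(T, lam). word T lam)) (increasing_trees n) {Ps. set_composition {1..n} Ps}"
    by (rule bij_betw_trans[OF word_bij comp_bij])
  moreover have "\<And>a. a \<in> increasing_trees n \<Longrightarrow> sigma a = (cmp \<circ> (\<lambda>(T, lam). word T lam)) a"
    by (auto simp: increasing_trees_def sigma_cmp)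
  ultimately show ?thesis using bij_betw_cong by blast
qed

end
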